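(* Let $h>1$, $q=2^h$, and let $U$ be a nonempty proper subset of $\mathrm{GF}(q)^{\star}$. Let $\Omega$ be a regular hyperoval of $PG(2,q^2)$. Then there are at least two affine points $P(x,y)\in\Omega$ with $\|x\|\in U$.
   Context: $\|x\|=x^{q+1}$ for $x\in\mathrm{GF}(q^2)$. Points of $PG(2,q^2)$ are written in affine coordinates $P(x,y)$ when not on the line at infinity. For $q$ even, a regular hyperoval of $PG(2,q^2)$ is the union of a non-degenerate conic and its nucleus (the common point of all its tangent lines). *)

theory Defs
  imports Main
begin

text \<open>Points of PG(2,F) are given by homogeneous coordinates: nonzero triples
  (x,y,z) in F^3, two triples representing the same point iff proportional.
  A set of projective points is represented by the set of all its nonzero
  coordinate triples (a cone closed under nonzero scaling).
  The affine point P(x,y) has coordinates (x,y,1); the line at infinity is z = 0.\<close>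

type_synonym 'a coef6 = "'a \<times> 'a \<times> 'a \<times> 'a \<times> 'a \<times> 'a"

definition scale3 :: "'a::field \<Rightarrow> 'a \<times> 'a \<times> 'a \<Rightarrow> 'a \<times> 'a \<times> 'a" where
  "scale3 t v = (case v of (x, y, z) \<Rightarrow> (t * x, t * y, t * z))"

definition proj_pt :: "('a::field \<times> 'a \<times> 'a) \<Rightarrow> ('a \<times> 'a \<times> 'a) set" where
  "proj_pt v = {w. \<exists>t. t \<noteq> 0 \<and> w = scale3 t v}"

definition qform :: "'a::field coef6 \<Rightarrow> 'a \<times> 'a \<times> 'a \<Rightarrow> 'a" where
  "qform C v = (case C of (a, b, c, f, g, h) \<Rightarrow> case v of (x, y, z) \<Rightarrow>
      a*x^2 + b*y^2 + c*z^2 + f*y*z + g*z*x + h*x*y)"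

definition qgrad :: "'a::field coef6 \<Rightarrow> 'a \<times> 'a \<times> 'a \<Rightarrow> 'a \<times> 'a \<times> 'a" where
  "qgrad C v = (case C of (a, b, c, f, g, h) \<Rightarrow> case v of (x, y, z) \<Rightarrow>
      (2*a*x + h*y + g*z, h*x + 2*b*y + f*z, g*x + f*y + 2*c*z))"

definition conic :: "'a::field coef6 \<Rightarrow> ('a \<times> 'a \<times> 'a) set" where
  "conic C = {v. v \<noteq> (0,0,0) \<and> qform C v = 0}"

definition nondegenerate_conic :: "'a::field coef6 \<Rightarrow> bool" where
  "nondegenerate_conic C \<longleftrightarrow> C \<noteq> (0,0,0,0,0,0) \<and>
     \<not> (\<exists>v. v \<noteq> (0,0,0) \<and> qform C v = 0 \<and> qgrad C v = (0,0,0))"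

definition pline :: "'a::field \<times> 'a \<times> 'a \<Rightarrow> ('a \<times> 'a \<times> 'a) set" where
  "pline L = (case L of (l, m, n) \<Rightarrow>
      {v. v \<noteq> (0,0,0) \<and> (case v of (x, y, z) \<Rightarrow> l*x + m*y + n*z = 0)})"

definition tangent_line :: "'a::field coef6 \<Rightarrow> 'a \<times> 'a \<times> 'a \<Rightarrow> bool" where
  "tangent_line C L \<longleftrightarrow> L \<noteq> (0,0,0) \<and>
     (\<exists>P. P \<noteq> (0,0,0) \<and> pline L \<inter> conic C = proj_pt P)"

definition is_nucleus :: "'a::field coef6 \<Rightarrow> 'a \<times> 'a \<times> 'a \<Rightarrow> bool" where
  "is_nucleus C N \<longleftrightarrow> N \<noteq> (0,0,0) \<and> (\<forall>L. tangent_line C L \<longrightarrow> N \<in> pline L)"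

definition regular_hyperoval :: "('a::field \<times> 'a \<times> 'a) set \<Rightarrow> bool" where
  "regular_hyperoval \<Omega> \<longleftrightarrow> (\<exists>C N. nondegenerate_conic C \<and> is_nucleus C N \<and>
      \<Omega> = conic C \<union> proj_pt N)"

end

theory Submission
  imports Defs "HOL-Computational_Algebra.Polynomial"
begin

lemma roots_pow_bound:
  fixes c :: "'a::field"
  assumes "0 < b"
  shows "card {x::'a. x^b = c} \<le> b"
proof -
  let ?p = "monom (1::'a) b - [:c:]"
  have c1: "coeff ?p b = 1" using assms by (cases b) auto
  have p0: "?p \<noteq> 0"
  proof
    assume "?p = 0" hence "coeff ?p b = 0" by simp
    with c1 show False by simp
  qed
  have dg: "degree ?p \<le> b"
    by (rule degree_diff_le) (auto simp: degree_monom_le)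
  have "{x::'a. x^b = c} = {x. poly ?p x = 0}" by (simp add: poly_monom)
  also have "card \<dots> \<le> degree ?p" by (rule card_poly_roots_bound[OF p0])
  finally show ?thesis using dg by simp
qed

lemma card_fibers:
  assumes "finite A" and "\<And>y. y \<in> f ` A \<Longrightarrow> card {x\<in>A. f x = y} = k"
  shows "card A = card (f ` A) * k"
proof -
  have "A = (\<Union>y\<in>f ` A. {x\<in>A. f x = y})" by auto
  hence "card A = card (\<Union>y\<in>f ` A. {x\<in>A. f x = y})" by simp
  also have "\<dots> = (\<Sum>y\<in>f ` A. card {x\<in>A. f x = y})"
    by (rule card_UN_disjoint) (use assms(1) in auto)
  also have "\<dots> = (\<Sum>y\<in>f ` A. k)" using assms(2) by simp
  finally show ?thesis by simp
qed

locale F2 =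
  fixes m :: nat and TY :: "'a::{field,finite} itself"
  assumes cardF: "card (UNIV::'a set) = (2^m)^2" and m2: "2 \<le> m"
begin

lemma char2: "(1::'a) + 1 = 0"
proof (rule ccontr)
  assume ne: "(1::'a) + 1 \<noteq> 0"
  have neg: "(x::'a) \<noteq> - x" if "x \<noteq> 0" for x
  proof
    assume "x = - x"
    hence "x + x = 0" by (metis add.right_inverse)
    hence "(1+1) * x = 0" by (simp add: distrib_right)
    thus False using ne that by simp
  qed
  let ?A = "UNIV - {0::'a}"
  have c: "card ?A = card ((\<lambda>x. {x, -x}) ` ?A) * 2"
  proof (rule card_fibers)
    fix y assume "y \<in> (\<lambda>x. {x, -x}) ` ?A"
    then obtain x where x: "x \<noteq> 0" "y = {x, -x}" by auto
    have "{z \<in> ?A. {z, -z} = y} = {x, -x}"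
      using x by (auto simp: doubleton_eq_iff)
    thus "card {z \<in> ?A. {z, -z} = y} = 2" using neg[OF x(1)] by simp
  qed simp
  have c2: "card ?A = (2^m)^2 - 1" using cardF by (simp add: card_Diff_singleton)
  have e: "even (((2::nat)^m)^2)" using m2 by simp
  have p: "((2::nat)^m)^2 > 0" by simp
  have o: "odd (N - 1)" if "even N" "0 < N" for N :: nat using that by presburger
  have "odd (card ?A)" using o[OF e p] c2 by simp
  moreover have "even (card ?A)" using c by simp
  ultimately show False by simp
qed

lemma add_self[simp]: "(x::'a) + x = 0"
  proof -
  have "x + x = (1+1)*x" by (simp add: distrib_right)
  thus ?thesis using char2 by simp
qed

end

context F2 begin

abbreviation qq :: nat where "qq \<equiv> 2^m"

lemma two0[simp]: "(2::'a) = 0" using char2 by (simp add: one_add_one[symmetric])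
lemma neg_id[simp]: "- (x::'a) = x" using add_self[of x] by (metis add.inverse_unique)
lemma diff_is_add: "(x::'a) - y = x + y" by (simp add: diff_conv_add_uminus)

lemma sq_add: "((x::'a)+y)^2 = x^2 + y^2"
  by (simp add: power2_sum)

lemma pow2_add: "((x::'a)+y)^(2^i) = x^(2^i) + y^(2^i)"
proof (induction i)
  case (Suc i)
  have "(x+y)^(2^Suc i) = ((x+y)^(2^i))^2" by (simp add: power_mult[symmetric] mult.commute)
  also have "\<dots> = (x^(2^i))^2 + (y^(2^i))^2" using Suc by (simp add: sq_add)
  also have "\<dots> = x^(2^Suc i) + y^(2^Suc i)" by (simp add: power_mult[symmetric] mult.commute)
  finally show ?case .
qed simp

lemma q_add: "((x::'a)+y)^qq = x^qq + y^qq" by (rule pow2_add)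

lemma fermat1: assumes "(x::'a) \<noteq> 0" shows "x^((2^m)^2 - 1) = 1"
proof -
  let ?A = "UNIV - {0::'a}"
  have im: "(\<lambda>y. x*y) ` ?A = ?A"
  proof
    show "(\<lambda>y. x*y) ` ?A \<subseteq> ?A" using assms by auto
    show "?A \<subseteq> (\<lambda>y. x*y) ` ?A"
    proof
      fix z assume z: "z \<in> ?A"
      have "z = x * (z/x)" using assms by simp
      moreover have "z/x \<in> ?A" using z assms by simp
      ultimately show "z \<in> (\<lambda>y. x*y) ` ?A" by blast
    qed
  qed
  have inj: "inj_on (\<lambda>y. x*y) ?A" using assms by (auto simp: inj_on_def)
  have "prod (\<lambda>y. y) ?A = prod (\<lambda>y. y) ((\<lambda>y. x*y) ` ?A)" using im by simp
  also have "\<dots> = prod (\<lambda>y. x*y) ?A" by (simp add: prod.reindex[OF inj])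
  also have "\<dots> = x^(card ?A) * prod (\<lambda>y. y) ?A" by (simp add: prod.distrib)
  finally have e: "prod (\<lambda>y. y) ?A = x^(card ?A) * prod (\<lambda>y. y) ?A" .
  have "prod (\<lambda>y. y) ?A \<noteq> 0" by (simp add: prod_zero_iff)
  hence "x^(card ?A) = 1" using e by (metis mult_cancel_right2)
  moreover have "card ?A = (2^m)^2 - 1" using cardF by (simp add: card_Diff_singleton)
  ultimately show ?thesis by simp
qed

lemma fermat: "(x::'a)^((2^m)^2) = x"
proof (cases "x = 0")
  case True thus ?thesis by simp
next
  case False
  have "((2::nat)^m)^2 = Suc (((2::nat)^m)^2 - 1)" by simp
  hence "x^((2^m)^2) = x * x^((2^m)^2 - 1)" by (metis power_Suc)
  thus ?thesis using fermat1[OF False] by simp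
qed

lemma fermat_qq: "((x::'a)^qq)^qq = x"
  using fermat[of x] by (simp add: power_mult[symmetric] power2_eq_square)

lemma sqrt_ex: "\<exists>s::'a. s^2 = x"
proof -
  have "inj (\<lambda>s::'a. s^2)"
  proof (rule injI)
    fix s t :: 'a assume "s^2 = t^2"
    hence "(s+t)^2 = 0" by (simp add: sq_add)
    hence "s + t = 0" by simp
    thus "s = t" by (metis add.inverse_unique neg_id)
  qed
  hence "surj (\<lambda>s::'a. s^2)" by (rule finite_UNIV_inj_surj[OF finite_UNIV])
  thus ?thesis by (metis surjD)
qed

definition tr :: "'a \<Rightarrow> 'a" where "tr x = (\<Sum>i<2*m. x^(2^i))"

lemma tr_add: "tr (x+y) = tr x + tr y"
  unfolding tr_def by (simp add: pow2_add sum.distrib)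

lemma tr_sq: "tr (x^2) = tr x"
proof -
  let ?f = "\<lambda>i. x^(2^i)"
  have "(x^2)^(2^i) = ?f (Suc i)" for i by (simp add: power_mult[symmetric] mult.commute)
  hence "tr (x^2) = (\<Sum>i<2*m. ?f (Suc i))" unfolding tr_def by simp
  moreover have "(\<Sum>i<Suc (2*m). ?f i) = ?f 0 + (\<Sum>i<2*m. ?f (Suc i))" by (rule sum.lessThan_Suc_shift)
  moreover have "(\<Sum>i<Suc (2*m). ?f i) = (\<Sum>i<2*m. ?f i) + ?f (2*m)" by simp
  moreover have "?f (2*m) = x" using fermat[of x] by (simp add: power_mult power2_eq_square mult.commute)
  moreover have "?f 0 = x" by simp
  ultimately show ?thesis unfolding tr_def by (simp add: add.commute)
qed

lemma sum_sq: "(sum g A)^2 = sum (\<lambda>i. (g i)^2) (A::'b set)" for g :: "'b \<Rightarrow> 'a"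
proof (induction A rule: infinite_finite_induct)
  case (insert x F) thus ?case by (simp add: sq_add)
qed auto

lemma tr_01: "tr x = 0 \<or> tr x = 1"
proof -
  have "(tr x)^2 = (\<Sum>i<2*m. (x^(2^i))^2)" unfolding tr_def by (rule sum_sq)
  also have "\<dots> = (\<Sum>i<2*m. (x^2)^(2^i))" by (simp add: power_mult[symmetric] mult.commute)
  also have "\<dots> = tr x" using tr_sq[of x] unfolding tr_def by simp
  finally have "tr x * (tr x - 1) = 0" by (simp add: power2_eq_square algebra_simps)
  thus ?thesis by simp
qed

lemma tr_zz: "tr (z^2 + z) = 0"
  by (simp add: tr_add tr_sq)

lemma tr_ex: "\<exists>t. tr t = 1"
proof (rule ccontr)
  assume "\<not> (\<exists>t. tr t = 1)"
  hence all0: "tr t = 0" for t using tr_01 by blast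
  let ?p = "\<Sum>i<2*m. monom (1::'a) (2^i)"
  have pe: "poly ?p x = tr x" for x unfolding tr_def by (simp add: poly_sum poly_monom)
  have m1: "2*m = Suc (2*m - 1)" using m2 by simp
  have "coeff ?p (2^(2*m-1)) = (\<Sum>i<2*m. if i = 2*m-1 then 1 else 0)"
    unfolding coeff_sum by (intro sum.cong) auto
  also have "\<dots> = 1" using m2 by simp
  finally have "?p \<noteq> 0" by auto
  have dg: "degree ?p \<le> 2^(2*m-1)"
  proof (rule degree_le, intro allI impI)
    fix j :: nat assume j: "2^(2*m-1) < j"
    have "(2::nat)^i < j" if "i < 2*m" for i
    proof -
      have "(2::nat)^i \<le> 2^(2*m-1)" using that by (intro power_increasing) auto
      thus ?thesis using j by (rule le_less_trans)
    qed
    thus "coeff ?p j = 0" unfolding coeff_sum by (intro sum.neutral) auto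
  qed
  have "card {x. poly ?p x = 0} \<le> degree ?p" by (rule card_poly_roots_bound) fact
  moreover have "{x. poly ?p x = 0} = (UNIV::'a set)" using pe all0 by auto
  ultimately have "(2^m)^2 \<le> (2::nat)^(2*m-1)" using dg cardF by simp
  moreover have "(2::nat)^(2*m-1) < (2^m)^2"
    using m2 by (simp add: power_mult[symmetric] mult.commute)
  ultimately show False by simp
qed

lemma tr_solve: assumes "tr x = 0" shows "\<exists>z. z^2 + z = x"
proof -
  let ?Z = "{x::'a. tr x = 0}"
  let ?S = "range (\<lambda>z::'a. z^2 + z)"
  obtain t where t: "tr t = 1" using tr_ex by blast
  have U: "(UNIV::'a set) = ?Z \<union> (\<lambda>y. y + t) ` ?Z"
  proof (intro set_eqI iffI)
    fix y :: 'a
    show "y \<in> ?Z \<union> (\<lambda>y. y + t) ` ?Z"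
    proof (cases "tr y = 0")
      case False hence "tr y = 1" using tr_01 by blast
      hence "tr (y + t) = 0" using t by (simp add: tr_add one_add_one)
      moreover have "y = (y + t) + t" by (simp add: add.assoc)
      ultimately show ?thesis by blast
    qed simp
  qed simp
  have D: "?Z \<inter> (\<lambda>y. y + t) ` ?Z = {}" using t by (auto simp: tr_add)
  have "card (UNIV::'a set) = card ?Z + card ((\<lambda>y. y + t) ` ?Z)"
    by (subst U, rule card_Un_disjoint) (use D in auto)
  also have "card ((\<lambda>y. y + t) ` ?Z) = card ?Z" by (rule card_image) (auto simp: inj_on_def)
  finally have cZ: "card (UNIV::'a set) = card ?Z * 2" by simp
  have cS: "card (UNIV::'a set) = card ?S * 2"
  proof (rule card_fibers)
    fix y assume "y \<in> ?S"
    then obtain z where z: "y = z^2 + z" by auto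
    have "{w \<in> UNIV. w^2 + w = y} = {z, z + 1}"
    proof (intro set_eqI iffI)
      fix w assume "w \<in> {w \<in> UNIV. w^2 + w = y}"
      hence "w^2 + w = z^2 + z" using z by simp
      hence s0: "(w^2 + w) + (z^2+z) = 0" by simp
      have "(w+z)*(w+z+1) = (w^2+w) + (z^2+z) + 2*w*z" by (simp add: algebra_simps power2_eq_square)
      hence "(w+z) * (w + z + 1) = 0" using s0 by simp
      hence "w + z = 0 \<or> w + z + 1 = 0" by simp
      thus "w \<in> {z, z+1}"
      proof
        assume "w + z = 0" hence "- w = z" by (rule add.inverse_unique)
        thus ?thesis by simp
      next
        assume "w + z + 1 = 0" hence "w + (z + 1) = 0" by (simp add: add.assoc)
        hence "- w = z + 1" by (rule add.inverse_unique)
        thus ?thesis by simp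
      qed
    next
      fix w assume "w \<in> {z, z+1}"
      thus "w \<in> {w \<in> UNIV. w^2 + w = y}" using z by (auto simp: sq_add)
    qed
    thus "card {w \<in> UNIV. w^2 + w = y} = 2" by simp
  qed simp
  have "?S \<subseteq> ?Z" using tr_zz by auto
  moreover have "card ?S = card ?Z" using cZ cS by simp
  ultimately have "?S = ?Z" by (intro card_subset_eq) auto
  hence "x \<in> ?S" using assms by simp
  then obtain z where "x = z^2 + z" by blast
  thus ?thesis by blast
qed

end

lemma nodvd_aux:
  fixes m j :: nat
  assumes "1 \<le> j" "j < 2*m"
  shows "\<not> (2^m + 1) dvd (2^j + (2::nat)^m)"
proof
  assume d: "(2^m + 1) dvd (2^j + (2::nat)^m)"
  show False
  proof (cases "j \<le> m")
    case True
    have "(2::nat)^j \<le> 2^m" using True by (intro power_increasing) auto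
    have "(2::nat)^1 \<le> 2^j" by (rule power_increasing) (use assms in auto)
    hence j1: "(2::nat)^j \<ge> 2" by simp
    have "2^j + (2::nat)^m = (2^m + 1) + (2^j - 1)" using j1 by simp
    with d have "(2^m + 1) dvd ((2^m + 1) + (2^j - (1::nat)))" by simp
    hence "(2^m + 1) dvd (2^j - (1::nat))" by (rule dvd_add_right_iff[THEN iffD1, OF dvd_refl])
    moreover have "0 < (2::nat)^j - 1" using j1 by simp
    ultimately have "2^m + 1 \<le> (2::nat)^j - 1" by (rule dvd_imp_le)
    moreover note \<open>(2::nat)^j \<le> 2^m\<close>
    ultimately show False by arith
  next
    case False
    define l where "l = j - m"
    have l: "1 \<le> l" "l < m" "j = m + l" using False assms unfolding l_def by auto
    have e: "(2^m + 1) * (2^l + 1) = (2^j + (2::nat)^m) + (2^l + 1)"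
      using l(3) by (simp add: algebra_simps power_add)
    have "(2^m + 1) dvd ((2^j + (2::nat)^m) + (2^l + 1))" unfolding e[symmetric] by (rule dvd_triv_left)
    hence "(2^m + 1) dvd ((2::nat)^l + 1)" by (rule dvd_add_right_iff[THEN iffD1, OF d])
    hence "2^m + 1 \<le> (2::nat)^l + 1" by (rule dvd_imp_le) simp
    moreover have "(2::nat)^l < 2^m" using l(2) by (intro power_strict_increasing) auto
    ultimately show False by simp
  qed
qed

context F2 begin

definition circ :: "'a \<Rightarrow> 'a set" where "circ r = {v. v^(qq+1) = r}"
definition GG :: "'a set" where "GG = {r. r^qq = r \<and> r \<noteq> 0}"

lemma qq_ge4: "qq \<ge> 4"
proof -
  have "(2::nat)^2 \<le> 2^m" using m2 by (intro power_increasing) auto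
  thus ?thesis by simp
qed

lemma card_GG: "card GG \<le> qq - 1"
proof -
  have "GG \<subseteq> {x. x^(qq-1) = 1}"
  proof
    fix x assume "x \<in> GG"
    hence x: "x^qq = x" "x \<noteq> 0" unfolding GG_def by auto
    have e: "qq = Suc (qq - 1)" using qq_ge4 by simp
    have "x^qq = x * x^(qq - 1)" by (metis e power_Suc)
    thus "x \<in> {x. x^(qq-1) = 1}" using x by simp
  qed
  hence "card GG \<le> card {x::'a. x^(qq-1) = 1}" by (intro card_mono) auto
  also have "\<dots> \<le> qq - 1" by (rule roots_pow_bound) (use qq_ge4 in simp)
  finally show ?thesis .
qed

lemma card_C1_le: "card (circ 1) \<le> qq + 1"
  unfolding circ_def by (rule roots_pow_bound) simp

lemma circ_nz: "r \<noteq> 0 \<Longrightarrow> v \<in> circ r \<Longrightarrow> v \<noteq> 0"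
  unfolding circ_def by auto

lemma norm_GG: assumes "(x::'a) \<noteq> 0" shows "x^(qq+1) \<in> GG"
proof -
  have "(x^(qq+1))^qq = (x^qq)^qq * x^qq" by (simp add: power_mult_distrib)
  also have "\<dots> = x^(qq+1)" by (simp add: fermat_qq mult.commute)
  finally show ?thesis using assms unfolding GG_def by simp
qed

lemma fiber: assumes "(x0::'a) \<noteq> 0"
  shows "{x \<in> UNIV - {0}. x^(qq+1) = x0^(qq+1)} = (\<lambda>w. w*x0) ` circ 1"
proof (intro set_eqI iffI)
  fix x assume "x \<in> {x \<in> UNIV - {0}. x^(qq+1) = x0^(qq+1)}"
  hence x: "x \<noteq> 0" "x^(qq+1) = x0^(qq+1)" by auto
  have "(x/x0)^(qq+1) = 1" using x assms by (simp add: power_divide)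
  moreover have "x = (x/x0)*x0" using assms by simp
  ultimately show "x \<in> (\<lambda>w. w*x0) ` circ 1" unfolding circ_def by blast
next
  fix x assume "x \<in> (\<lambda>w. w*x0) ` circ 1"
  then obtain w where w: "w^(qq+1) = 1" "x = w*x0" unfolding circ_def by auto
  have "w \<noteq> 0"
  proof
    assume "w = 0" with w(1) show False by simp
  qed
  thus "x \<in> {x \<in> UNIV - {0}. x^(qq+1) = x0^(qq+1)}" using w assms by (simp add: power_mult_distrib)
qed

lemma card_fiber: assumes "(x0::'a) \<noteq> 0"
  shows "card ((\<lambda>w. w*x0) ` circ 1) = card (circ 1)"
  by (rule card_image) (use assms in \<open>auto simp: inj_on_def\<close>)

lemma count_main: "card (circ 1) = qq + 1 \<and> (\<lambda>x. x^(qq+1)) ` (UNIV - {0}) = GG"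
proof -
  let ?A = "UNIV - {0::'a}"
  let ?N = "\<lambda>x::'a. x^(qq+1)"
  have c: "card ?A = card (?N ` ?A) * card (circ 1)"
  proof (rule card_fibers)
    fix y assume "y \<in> ?N ` ?A"
    then obtain x0 where x0: "x0 \<noteq> 0" "y = ?N x0" by auto
    show "card {x \<in> ?A. ?N x = y} = card (circ 1)"
      using fiber[OF x0(1)] card_fiber[OF x0(1)] x0(2) by simp
  qed simp
  have cA: "card ?A = (qq - 1) * (qq + 1)"
    using cardF qq_ge4 by (simp add: card_Diff_singleton power2_eq_square algebra_simps)
  have sub: "?N ` ?A \<subseteq> GG" using norm_GG by auto
  have a1: "card (?N ` ?A) \<le> qq - 1"
    using card_mono[OF finite sub] card_GG by simp
  have a2: "card (circ 1) \<le> qq + 1" by (rule card_C1_le)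
  have eq: "card (?N ` ?A) * card (circ 1) = (qq - 1) * (qq + 1)" using c cA by simp
  have e1: "card (?N ` ?A) = qq - 1"
  proof (rule ccontr)
    assume "card (?N ` ?A) \<noteq> qq - 1"
    hence "card (?N ` ?A) < qq - 1" using a1 by simp
    hence "card (?N ` ?A) * card (circ 1) < (qq - 1) * (qq + 1)"
    proof -
      have "card (?N ` ?A) * card (circ 1) \<le> card (?N ` ?A) * (qq + 1)" by (rule mult_le_mono2[OF a2])
      also have "\<dots> < (qq - 1) * (qq + 1)" by (rule mult_less_mono1[OF \<open>card (?N ` ?A) < qq - 1\<close>]) simp
      finally show ?thesis .
    qed
    thus False using eq by simp
  qed
  have "(qq - 1) * card (circ 1) = (qq - 1) * (qq + 1)" using eq e1 by simp
  hence "card (circ 1) = qq + 1 \<or> qq - 1 = 0" by (simp only: mult_cancel1)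
  moreover have "qq - 1 \<noteq> 0" using qq_ge4 by simp
  ultimately have e2: "card (circ 1) = qq + 1" by blast
  have "?N ` ?A = GG"
    by (rule card_subset_eq) (use sub e1 card_GG card_mono[OF finite sub] in auto)
  thus ?thesis using e2 by simp
qed

lemma card_C1: "card (circ 1) = qq + 1" using count_main by simp

lemma norm_surj: assumes "r \<in> GG" shows "\<exists>x. x \<noteq> 0 \<and> x^(qq+1) = r"
proof -
  have "r \<in> (\<lambda>x. x^(qq+1)) ` (UNIV - {0})" using count_main assms by simp
  then obtain x where "x \<in> UNIV - {0}" "r = x^(qq+1)" by blast
  thus ?thesis by blast
qed

lemma card_circ: assumes "r \<in> GG" shows "card (circ r) = qq + 1"
proof -
  obtain x0 where x0: "x0 \<noteq> 0" "x0^(qq+1) = r" using norm_surj[OF assms] by blast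
  have "r \<noteq> 0" using assms unfolding GG_def by simp
  hence "circ r = {x \<in> UNIV - {0}. x^(qq+1) = x0^(qq+1)}" using x0 unfolding circ_def by auto
  thus ?thesis using fiber[OF x0(1)] card_fiber[OF x0(1)] card_C1 by simp
qed

lemma omega_ex: assumes "0 < k" "\<not> (qq+1) dvd k"
  shows "\<exists>w \<in> circ 1. w^k \<noteq> 1"
proof (rule ccontr)
  assume "\<not> ?thesis"
  hence all: "w^k = 1" if "w \<in> circ 1" for w using that by blast
  define b where "b = k mod (qq+1)"
  have "b \<noteq> 0" using assms(2) unfolding b_def by (simp add: dvd_eq_mod_eq_0)
  hence b: "0 < b" "b < qq + 1" unfolding b_def by auto
  have "circ 1 \<subseteq> {x. x^b = 1}"
  proof
    fix w assume w: "w \<in> circ 1"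
    hence w1: "w^(qq+1) = 1" unfolding circ_def by simp
    have "k = (qq+1) * (k div (qq+1)) + b" unfolding b_def by (rule mult_div_mod_eq[symmetric])
    hence "w^k = (w^(qq+1))^(k div (qq+1)) * w^b" by (metis power_add power_mult)
    thus "w \<in> {x. x^b = 1}" using all[OF w] w1 by simp
  qed
  hence "card (circ 1) \<le> card {x::'a. x^b = 1}" by (intro card_mono) auto
  also have "\<dots> \<le> b" by (rule roots_pow_bound) (use b in simp)
  finally show False using card_C1 b by simp
qed

lemma powsum0: assumes "0 < k" "\<not> (qq+1) dvd k"
  shows "(\<Sum>v\<in>circ r. v^k) = 0"
proof -
  obtain w where w: "w \<in> circ 1" "w^k \<noteq> 1" using omega_ex[OF assms] by blast
  have w1: "w^(qq+1) = 1" using w unfolding circ_def by simp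
  have wnz: "w \<noteq> 0"
  proof
    assume "w = 0" with w1 show False by simp
  qed
  have im: "(\<lambda>v. w*v) ` circ r = circ r"
  proof (intro set_eqI iffI)
    fix x assume "x \<in> (\<lambda>v. w*v) ` circ r"
    thus "x \<in> circ r" using w1 unfolding circ_def by (auto simp: power_mult_distrib)
  next
    fix x assume x: "x \<in> circ r"
    have "x = w * (x/w)" using wnz by simp
    moreover have "(x/w) \<in> circ r" using x w1 unfolding circ_def by (simp add: power_divide)
    ultimately show "x \<in> (\<lambda>v. w*v) ` circ r" by blast
  qed
  have inj: "inj_on (\<lambda>v. w*v) (circ r)" using wnz by (auto simp: inj_on_def)
  let ?S = "\<Sum>v\<in>circ r. v^k"
  have "?S = (\<Sum>v\<in>(\<lambda>v. w*v) ` circ r. v^k)" using im by simp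
  also have "\<dots> = (\<Sum>v\<in>circ r. (w*v)^k)" by (simp add: sum.reindex[OF inj])
  also have "\<dots> = w^k * ?S" by (simp add: power_mult_distrib sum_distrib_left)
  finally have "(w^k - 1) * ?S = 0" by (simp add: algebra_simps)
  thus ?thesis using w(2) by simp
qed

lemma ofnat_qq1: "(of_nat (qq + 1) :: 'a) = 1"
proof -
  have "(of_nat qq :: 'a) = 2^m" by simp
  also have "\<dots> = 0" using m2 by simp
  finally show ?thesis by simp
qed

lemma circ_tr: assumes "r \<in> GG" "\<tau> = 0 \<or> \<tau> = 1"
  shows "\<exists>v. v^(qq+1) = r \<and> tr v = \<tau>"
proof (rule ccontr)
  assume "\<not> ?thesis"
  hence ne: "tr v \<noteq> \<tau>" if "v \<in> circ r" for v using that unfolding circ_def by blast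
  have sig: "tr v = \<tau> + 1" if "v \<in> circ r" for v
    using ne[OF that] tr_01[of v] assms(2) by (auto simp: one_add_one)
  have r0: "r \<noteq> 0" using assms unfolding GG_def by simp
  let ?S = "\<Sum>v\<in>circ r. tr v * v^qq"
  have "?S = (\<Sum>v\<in>circ r. (\<tau> + 1) * v^qq)" using sig by simp
  also have "\<dots> = (\<tau> + 1) * (\<Sum>v\<in>circ r. v^qq)" by (simp add: sum_distrib_left)
  also have "(\<Sum>v\<in>circ r. v^qq) = 0"
  proof (rule powsum0)
    show "\<not> (qq+1) dvd qq"
    proof
      assume "(qq+1) dvd qq" hence "qq+1 \<le> qq" by (rule dvd_imp_le) simp
      thus False by simp
    qed
  qed simp
  finally have S0: "?S = 0" by simp
  let ?f = "\<lambda>i. \<Sum>v\<in>circ r. v^(2^i + qq)"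
  have "?S = (\<Sum>v\<in>circ r. \<Sum>i<2*m. v^(2^i + qq))"
    unfolding tr_def by (simp add: sum_distrib_right power_add)
  also have "\<dots> = (\<Sum>i<2*m. ?f i)" by (rule sum.swap)
  also have "\<dots> = ?f 0 + (\<Sum>i<2*m-1. ?f (Suc i))"
  proof -
    have "2*m = Suc (2*m-1)" using m2 by simp
    hence "(\<Sum>i<2*m. ?f i) = (\<Sum>i<Suc (2*m-1). ?f i)" by simp
    also have "\<dots> = ?f 0 + (\<Sum>i<2*m-1. ?f (Suc i))" by (rule sum.lessThan_Suc_shift)
    finally show ?thesis .
  qed
  also have "(\<Sum>i<2*m-1. ?f (Suc i)) = 0"
  proof (rule sum.neutral, rule ballI)
    fix i assume "i \<in> {..<2*m-1}"
    hence "1 \<le> Suc i" "Suc i < 2*m" by auto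
    hence nd: "\<not> (qq+1) dvd (2^(Suc i) + qq)" by (rule nodvd_aux)
    show "?f (Suc i) = 0" by (rule powsum0[OF _ nd]) simp
  qed
  also have "?f 0 = (\<Sum>v\<in>circ r. r)" unfolding circ_def by (simp add: add.commute)
  also have "\<dots> = r" using card_circ[OF assms(1)] ofnat_qq1 by simp
  finally show False using S0 r0 by simp
qed

end

lemma qform_expand: "qform (a,b,c,f,g,k) (x,y,z) = a*x^2 + b*y^2 + c*z^2 + f*y*z + g*z*x + k*x*y"
  by (simp add: qform_def)

lemma qform_scale: "qform C (scale3 t v) = t^2 * qform C v"
  by (cases C, cases v) (simp add: qform_def scale3_def algebra_simps power2_eq_square)

lemma scale3_nz: "t \<noteq> 0 \<Longrightarrow> v \<noteq> (0,0,0) \<Longrightarrow> scale3 t v \<noteq> (0,0,0)"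
  by (cases v) (auto simp: scale3_def)

context F2 begin

lemma eq_add0: "(x::'a) = y \<longleftrightarrow> x + y = 0"
proof
  assume "x + y = 0" hence "- x = y" by (rule add.inverse_unique)
  thus "x = y" by simp
qed simp

lemma sq_inj: "(y::'a)^2 = s^2 \<Longrightarrow> y = s"
proof -
  assume "y^2 = s^2"
  hence "(y+s)^2 = 0" by (simp add: sq_add)
  thus "y = s" using eq_add0 by simp
qed

lemma qgrad2: "qgrad (a,b,c,f,g,k::'a) (x,y,z) = (k*y + g*z, k*x + f*z, g*x + f*y)"
  by (simp add: qgrad_def)

lemma nd_facts:
  assumes nd: "nondegenerate_conic (a,b,c,f,g,k::'a)"
  shows "qform (a,b,c,f,g,k) (f,g,k) \<noteq> 0"
proof -
  have gr: "qgrad (a,b,c,f,g,k) (f,g,k) = (0,0,0)"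
    by (simp add: qgrad2 mult.commute)
  have nz: "(f,g,k) \<noteq> (0,0,0)"
  proof
    assume z: "(f,g,k) = (0,0,0)"
    obtain sa where sa: "sa^2 = a" using sqrt_ex by blast
    obtain sb where sb: "sb^2 = b" using sqrt_ex by blast
    define v where "v = (if a = 0 then (1,0,0) else (sb, sa, 0::'a))"
    have "v \<noteq> (0,0,0)" using sa unfolding v_def by auto
    moreover have "qform (a,b,c,f,g,k) v = 0"
      using z sa sb unfolding v_def by (auto simp: qform_def mult.commute)
    moreover have "qgrad (a,b,c,f,g,k) v = (0,0,0)"
      using z unfolding v_def by (auto simp: qgrad_def)
    ultimately show False using nd unfolding nondegenerate_conic_def by blast
  qed
  show ?thesis using nd gr nz unfolding nondegenerate_conic_def by blast
qed

lemma line_pt_iff: "v \<in> pline (l1,l2,l3::'a) \<longleftrightarrow> v \<noteq> (0,0,0) \<and> l1 * fst v + l2 * fst (snd v) + l3 * snd (snd v) = 0"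
  by (cases v) (simp add: pline_def)

lemma conic_iff: "v \<in> conic (C::'a coef6) \<longleftrightarrow> v \<noteq> (0,0,0) \<and> qform C v = 0"
  by (simp add: conic_def)

lemma proj_iff: "w \<in> proj_pt (v::'a\<times>'a\<times>'a) \<longleftrightarrow> (\<exists>t. t \<noteq> 0 \<and> w = scale3 t v)"
  by (simp add: proj_pt_def)

lemma nucleus_affine:
  assumes nd: "nondegenerate_conic (a,b,c,f,g,k::'a)" and nuc: "is_nucleus (a,b,c,f,g,k) N"
    and b0: "b \<noteq> 0" and k0: "k \<noteq> 0"
  shows "(f/k, g/k, 1) \<in> proj_pt N"
proof -
  let ?C = "(a,b,c,f,g,k)"
  define n where "n = f/k"
  define \<gamma> where "\<gamma> = g/k"
  have fn: "f = k*n" unfolding n_def using k0 by simp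
  have gg: "g = k*\<gamma>" unfolding \<gamma>_def using k0 by simp
  have QN: "qform ?C (f,g,k) = k^2 * qform ?C (n, \<gamma>, 1)"
    using qform_scale[of ?C k "(n,\<gamma>,1)"] fn gg by (simp add: scale3_def mult.commute)
  have Qn0: "qform ?C (n,\<gamma>,1) \<noteq> 0" using nd_facts[OF nd] QN by auto
  define An where "An = a*n^2 + g*n + c"
  obtain y0 where y0: "y0^2 = An / b" using sqrt_ex by blast
  define \<kappa> where "\<kappa> = b*\<gamma>^2 + c + f*\<gamma>"
  have kap: "qform ?C (n,\<gamma>,1) = a*n^2 + \<kappa>"
  proof -
    have "qform ?C (n,\<gamma>,1) = a*n^2 + \<kappa> + (g*n + k*n*\<gamma>)"
      unfolding \<kappa>_def by (simp add: qform_def algebra_simps)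
    also have "g*n + k*n*\<gamma> = 0" using gg by (simp add: mult.commute mult.left_commute)
    finally show ?thesis by simp
  qed
  have T1: "tangent_line ?C (1,0,n)"
    unfolding tangent_line_def
  proof (intro conjI exI)
    show "(1::'a,0::'a,n) \<noteq> (0,0,0)" by simp
    show "(n,y0,1::'a) \<noteq> (0,0,0)" by simp
    show "pline (1,0,n) \<inter> conic ?C = proj_pt (n,y0,1)"
    proof (intro set_eqI iffI)
      fix v assume v: "v \<in> pline (1,0,n) \<inter> conic ?C"
      obtain x y z where xyz: "v = (x,y,z)" by (cases v)
      have l: "x + n*z = 0" "(x,y,z) \<noteq> (0,0,0)" using v xyz by (auto simp: line_pt_iff)
      hence x: "x = n*z" using eq_add0 by blast
      have q: "qform ?C (x,y,z) = 0" using v xyz by (simp add: conic_iff)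
      have "qform ?C (x,y,z) = b*y^2 + An*z^2 + (f + k*n)*y*z"
        unfolding x An_def by (simp add: qform_def algebra_simps power2_eq_square)
      also have "f + k*n = 0" using fn by simp
      finally have "b*y^2 = An*z^2" using q eq_add0 by simp
      hence "b*y^2 = b*(y0*z)^2" using y0 b0 by (simp add: power_mult_distrib field_simps)
      hence "y^2 = (y0*z)^2" using b0 by simp
      hence yy: "y = y0*z" by (rule sq_inj)
      have "z \<noteq> 0" using l(2) x yy by auto
      moreover have "v = scale3 z (n,y0,1)" using xyz x yy by (simp add: scale3_def mult.commute)
      ultimately show "v \<in> proj_pt (n,y0,1)" by (auto simp: proj_iff)
    next
      fix v assume "v \<in> proj_pt (n,y0,1)"
      then obtain t where t: "t \<noteq> 0" "v = scale3 t (n,y0,1)" by (auto simp: proj_iff)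
      have "qform ?C (n,y0,1) = b*y0^2 + An + (f + k*n)*y0"
        unfolding An_def by (simp add: qform_def algebra_simps)
      also have "\<dots> = 0" using fn y0 b0 by simp
      finally have "qform ?C v = 0" using t by (simp add: qform_scale)
      moreover have "v \<noteq> (0,0,0)" using t by (simp add: scale3_def)
      moreover have "v \<in> pline (1,0,n)" using t by (simp add: scale3_def pline_def mult.commute)
      ultimately show "v \<in> pline (1,0,n) \<inter> conic ?C" by (simp add: conic_iff)
    qed
  qed
  have T2: "tangent_line ?C (0,1,\<gamma>)"
  proof -
    have Qline: "qform ?C (x, \<gamma>*z, z) = a*x^2 + \<kappa>*z^2" for x z
    proof -
      have "qform ?C (x, \<gamma>*z, z) = a*x^2 + \<kappa>*z^2 + (g + k*\<gamma>)*x*z"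
        unfolding \<kappa>_def by (simp add: qform_def algebra_simps power2_eq_square)
      also have "g + k*\<gamma> = 0" using gg by simp
      finally show ?thesis by simp
    qed
    have inl: "v \<in> pline (0,1,\<gamma>) \<longleftrightarrow> v \<noteq> (0,0,0) \<and> fst (snd v) = \<gamma> * snd (snd v)" for v
      using eq_add0 by (auto simp: line_pt_iff)
    show ?thesis
    proof (cases "a = 0")
      case True
      have kp: "\<kappa> \<noteq> 0" using Qn0 kap True by simp
      show ?thesis unfolding tangent_line_def
      proof (intro conjI exI)
        show "(0::'a,1::'a,\<gamma>) \<noteq> (0,0,0)" by simp
        show "(1::'a,0::'a,0::'a) \<noteq> (0,0,0)" by simp
        show "pline (0,1,\<gamma>) \<inter> conic ?C = proj_pt (1::'a,0::'a,0::'a)"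
        proof (intro set_eqI iffI)
          fix v assume v: "v \<in> pline (0,1,\<gamma>) \<inter> conic ?C"
          obtain x y z where xyz: "v = (x,y,z)" by (cases v)
          have y: "y = \<gamma>*z" "(x,y,z) \<noteq> (0,0,0)" using v xyz inl by auto
          have "qform ?C (x,\<gamma>*z,z) = 0" using v xyz y by (simp add: conic_iff)
          hence "z = 0" using Qline True kp by simp
          hence "x \<noteq> 0" "v = scale3 x (1::'a,0::'a,0::'a)" using y xyz by (auto simp: scale3_def)
          thus "v \<in> proj_pt (1::'a,0::'a,0::'a)" by (auto simp: proj_iff)
        next
          fix v assume "v \<in> proj_pt (1::'a,0::'a,0::'a)"
          then obtain t where t: "t \<noteq> 0" "v = scale3 t (1::'a,0::'a,0::'a)" by (auto simp: proj_iff)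
          have "qform ?C (1,0,0) = 0" using True by (simp add: qform_def)
          hence "qform ?C v = 0" using t by (simp add: qform_scale)
          thus "v \<in> pline (0,1,\<gamma>) \<inter> conic ?C"
            using t by (simp add: conic_iff scale3_def pline_def)
        qed
      qed
    next
      case False
      obtain s where s: "s^2 = \<kappa>/a" using sqrt_ex by blast
      show ?thesis unfolding tangent_line_def
      proof (intro conjI exI)
        show "(0::'a,1::'a,\<gamma>) \<noteq> (0,0,0)" by simp
        show "(s,\<gamma>,1::'a) \<noteq> (0,0,0)" by simp
        show "pline (0,1,\<gamma>) \<inter> conic ?C = proj_pt (s,\<gamma>,1)"
        proof (intro set_eqI iffI)
          fix v assume v: "v \<in> pline (0,1,\<gamma>) \<inter> conic ?C"
          obtain x y z where xyz: "v = (x,y,z)" by (cases v)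
          have y: "y = \<gamma>*z" "(x,y,z) \<noteq> (0,0,0)" using v xyz inl by auto
          have "qform ?C (x,\<gamma>*z,z) = 0" using v xyz y by (simp add: conic_iff)
          hence "a*x^2 = \<kappa>*z^2" using Qline eq_add0 by simp
          hence "a*x^2 = a*(s*z)^2" using s False by (simp add: power_mult_distrib field_simps)
          hence "x^2 = (s*z)^2" using False by simp
          hence xx: "x = s*z" by (rule sq_inj)
          have "z \<noteq> 0" using y xx by auto
          moreover have "v = scale3 z (s,\<gamma>,1)" using xyz xx y by (simp add: scale3_def mult.commute)
          ultimately show "v \<in> proj_pt (s,\<gamma>,1)" by (auto simp: proj_iff)
        next
          fix v assume "v \<in> proj_pt (s,\<gamma>,1)"
          then obtain t where t: "t \<noteq> 0" "v = scale3 t (s,\<gamma>,1)" by (auto simp: proj_iff)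
          have "qform ?C (s,\<gamma>*1,1) = 0" using Qline[of s 1] s False by simp
          hence "qform ?C v = 0" using t by (simp add: qform_scale)
          moreover have "v \<in> pline (0,1,\<gamma>)" using t by (simp add: scale3_def pline_def mult.commute)
          ultimately show "v \<in> pline (0,1,\<gamma>) \<inter> conic ?C"
            using t by (simp add: conic_iff scale3_def)
        qed
      qed
    qed
  qed
  have N1: "N \<in> pline (1,0,n)" "N \<in> pline (0,1,\<gamma>)"
    using nuc T1 T2 unfolding is_nucleus_def by auto
  obtain N1 N2 N3 where NN: "N = (N1,N2,N3)" by (cases N)
  have e1: "N1 = n*N3" using N1(1) NN eq_add0 by (simp add: line_pt_iff)
  have e2: "N2 = \<gamma>*N3" using N1(2) NN eq_add0 by (simp add: line_pt_iff)
  have N3: "N3 \<noteq> 0" using N1(1) NN e1 e2 by (auto simp: line_pt_iff)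
  have "(n,\<gamma>,1) = scale3 (1/N3) N" using NN e1 e2 N3 by (simp add: scale3_def)
  moreover have "1/N3 \<noteq> 0" using N3 by simp
  ultimately show ?thesis unfolding n_def \<gamma>_def proj_iff by blast
qed

end

lemma ident_mob:
  fixes b b1 n n1 u w w1 :: "'a::comm_ring_1"
  shows "(n*n1+u)*(b*b1 + b*n1*w1 + n*b1*w + n*n1*w*w1 - u*w*w1) =
    (((n*n1+u)*w + b*n1)*((n*n1+u)*w1 + b1*n) - b*b1*u) + 2*(b*b1*u - u*(n*n1+u)*w*w1)"
  by (simp add: algebra_simps)

context F2 begin

lemma norm_fix: "((x::'a)^(qq+1))^qq = x^(qq+1)"
proof -
  have "(x^(qq+1))^qq = (x^qq)^qq * x^qq" by (simp add: power_mult_distrib)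
  also have "\<dots> = x^(qq+1)" by (simp add: fermat_qq mult.commute)
  finally show ?thesis .
qed

lemma GG_mult: "x \<in> GG \<Longrightarrow> y \<in> GG \<Longrightarrow> x*y \<in> GG"
  unfolding GG_def by (simp add: power_mult_distrib)
lemma GG_div: "x \<in> GG \<Longrightarrow> y \<in> GG \<Longrightarrow> x/y \<in> GG"
  unfolding GG_def by (simp add: power_divide)
lemma GG_norm: "(x::'a) \<noteq> 0 \<Longrightarrow> x^(qq+1) \<in> GG"
  unfolding GG_def using norm_fix by simp

lemma onc: "b*y^2 + (f + k*x)*y + (a*x^2 + g*x + c) = 0 \<Longrightarrow> (x,y,1::'a) \<in> conic (a,b,c,f,g,k)"
  by (simp add: conic_iff qform_def algebra_simps)

lemma quad_root:
  assumes "b \<noteq> 0" "B \<noteq> 0" "z^2 + z = b*A/B^2"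
  shows "b*(B*z/b)^2 + B*(B*z/b) + (A::'a) = 0"
proof -
  have "b*(B*z/b)^2 + B*(B*z/b) = B^2/b * (z^2+z)"
    using assms(1) by (simp add: field_simps power2_eq_square)
  also have "\<dots> = A" using assms by (simp add: field_simps)
  finally show ?thesis by simp
qed

lemma quad_two:
  assumes "b \<noteq> 0" "B \<noteq> 0" "tr (b*A/B^2) = 0"
  shows "\<exists>y1 y2. y1 \<noteq> y2 \<and> b*y1^2 + B*y1 + (A::'a) = 0 \<and> b*y2^2 + B*y2 + A = 0"
proof -
  obtain z where z: "z^2 + z = b*A/B^2" using tr_solve[OF assms(3)] by blast
  have z1: "(z+1)^2 + (z+1) = b*A/B^2"
  proof -
    have "(z+1)^2 + (z+1) = z^2 + z + (1 + 1)" by (simp add: sq_add algebra_simps)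
    thus ?thesis using z char2 by simp
  qed
  have ne: "B*z/b \<noteq> B*(z+1)/b"
  proof
    assume "B*z/b = B*(z+1)/b"
    hence "B*z = B*(z+1)" using assms(1) by (simp add: divide_cancel_right)
    hence "z = z + 1" using assms(2) by simp
    thus False by simp
  qed
  show ?thesis using quad_root[OF assms(1,2) z] quad_root[OF assms(1,2) z1] ne by blast
qed

lemma two_in: assumes "u \<in> GG" shows "\<exists>c1 c2. c1 \<noteq> c2 \<and> c1 \<in> circ u - {p} \<and> c2 \<in> circ u - {p}"
proof -
  let ?S = "circ u - {p}"
  have "card ?S \<ge> qq" using card_circ[OF assms] by (simp add: card_Diff_singleton_if)
  hence cS: "card ?S \<ge> 2" using qq_ge4 by simp
  have "?S \<noteq> {}"
  proof
    assume "?S = {}" hence "card ?S = 0" by simp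
    with cS show False by simp
  qed
  then obtain c1 where c1: "c1 \<in> ?S" by blast
  have "card (?S - {c1}) \<ge> 1" using cS c1 by (simp add: card_Diff_singleton)
  have "?S - {c1} \<noteq> {}"
  proof
    assume "?S - {c1} = {}" hence "card (?S - {c1}) = 0" by simp
    with \<open>card (?S - {c1}) \<ge> 1\<close> show False by simp
  qed
  then obtain c2 where "c2 \<in> ?S - {c1}" by blast
  thus ?thesis using c1 by blast
qed

definition good :: "'a coef6 \<Rightarrow> 'a \<times> 'a \<times> 'a \<Rightarrow> 'a \<Rightarrow> 'a \<Rightarrow> 'a \<Rightarrow> bool" where
  "good C N u x y \<longleftrightarrow> x^(qq+1) = u \<and> ((x,y,1) \<in> conic C \<or> (x,y,1) \<in> proj_pt N)"

lemma main:
  assumes u: "u \<in> GG" and nd: "nondegenerate_conic (a,b,c,f,g,k)"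
    and nuc: "is_nucleus (a,b,c,f,g,k) N"
  shows "\<exists>x1 y1 x2 y2. (x1,y1) \<noteq> (x2,y2) \<and> good (a,b,c,f,g,k) N u x1 y1 \<and> good (a,b,c,f,g,k) N u x2 y2"
proof -
  let ?C = "(a,b,c,f,g,k)"
  have Q0: "qform ?C (f,g,k) \<noteq> 0" by (rule nd_facts[OF nd])
  have cu: "x \<in> circ u \<longleftrightarrow> x^(qq+1) = u" for x unfolding circ_def by simp
  show ?thesis
  proof (cases "b = 0")
    case b0: True
    obtain c1 c2 where cc: "c1 \<noteq> c2" "c1 \<in> circ u - {f/k}" "c2 \<in> circ u - {f/k}"
      using two_in[OF u] by blast
    have Bnz: "f + k*x \<noteq> 0" if "x \<in> circ u - {f/k}" for x
    proof
      assume B: "f + k*x = 0"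
      show False
      proof (cases "k = 0")
        case True
        hence "f = 0" using B by simp
        thus False using Q0 b0 True by (simp add: qform_def)
      next
        case False
        have "f = k*x" using B eq_add0 by simp
        hence "x = f/k" using False by simp
        thus False using that by simp
      qed
    qed
    have pt: "good ?C N u x (( a*x^2 + g*x + c)/(f + k*x))" if "x \<in> circ u - {f/k}" for x
    proof -
      have "b*((a*x^2 + g*x + c)/(f + k*x))^2 + (f + k*x)*((a*x^2 + g*x + c)/(f + k*x)) + (a*x^2 + g*x + c) = 0"
        using b0 Bnz[OF that] by simp
      hence "(x, (a*x^2 + g*x + c)/(f + k*x), 1) \<in> conic ?C" by (rule onc)
      thus ?thesis using that cu unfolding good_def by auto
    qed
    show ?thesis using pt[OF cc(2)] pt[OF cc(3)] cc(1) by blast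
  next
    case bnz: False
    show ?thesis
    proof (cases "k = 0")
      case k0: True
      show ?thesis
      proof (cases "f = 0")
        case f0: True
        obtain c1 c2 where cc: "c1 \<noteq> c2" "c1 \<in> circ u - {0}" "c2 \<in> circ u - {0}"
          using two_in[OF u] by blast
        have pt: "\<exists>y. good ?C N u x y" if "x \<in> circ u - {0}" for x
        proof -
          obtain y where y: "y^2 = (a*x^2 + g*x + c)/b" using sqrt_ex by blast
          have "b*y^2 + (f + k*x)*y + (a*x^2 + g*x + c) = 0" using y bnz f0 k0 by simp
          hence "(x,y,1) \<in> conic ?C" by (rule onc)
          thus ?thesis using that cu unfolding good_def by auto
        qed
        obtain y1 y2 where "good ?C N u c1 y1" "good ?C N u c2 y2" using pt cc by meson
        thus ?thesis using cc(1) by blast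
      next
        case fnz: False
        have Q0': "a*f^2 + b*g^2 \<noteq> 0" using Q0 k0 by (simp add: qform_def)
        obtain s where s: "s^2 = a*b" using sqrt_ex by blast
        define \<beta> where "\<beta> = s/f + b*g/f^2"
        have bt: "\<beta> \<noteq> 0"
        proof
          assume "\<beta> = 0"
          hence "s/f = b*g/f^2" unfolding \<beta>_def using eq_add0 by simp
          hence "s = b*g/f" using fnz by (simp add: field_simps power2_eq_square)
          hence "a*b = (b*g/f)^2" using s by simp
          hence "a*f^2 = b*g^2" using fnz bnz by (simp add: field_simps power2_eq_square)
          thus False using Q0' eq_add0 by simp
        qed
        define \<gamma> where "\<gamma> = b*c/f^2"
        have r: "\<beta>^(qq+1) * u \<in> GG" by (rule GG_mult[OF GG_norm[OF bt] u])
        obtain v where v: "v^(qq+1) = \<beta>^(qq+1) * u" "tr v = tr \<gamma>"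
          using circ_tr[OF r tr_01] by blast
        define x where "x = v/\<beta>"
        have xu: "x^(qq+1) = u" unfolding x_def using v bt by (simp add: power_divide)
        have X: "b*(a*x^2 + g*x + c)/f^2 = (s*x/f)^2 + (b*g/f^2)*x + \<gamma>"
          unfolding \<gamma>_def using s fnz by (simp add: field_simps power2_eq_square)
        have "tr (b*(a*x^2 + g*x + c)/(f + k*x)^2) = tr ((s*x/f)^2 + (b*g/f^2)*x + \<gamma>)"
          using X k0 by simp
        also have "\<dots> = tr (s*x/f + (b*g/f^2)*x) + tr \<gamma>" by (simp add: tr_add tr_sq)
        also have "s*x/f + (b*g/f^2)*x = v"
        proof -
          have "s*x/f + (b*g/f^2)*x = \<beta>*x" unfolding \<beta>_def by (simp add: distrib_right)
          also have "\<beta>*x = v" unfolding x_def using bt by simp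
          finally show ?thesis .
        qed
        finally have T: "tr (b*(a*x^2 + g*x + c)/(f + k*x)^2) = 0" using v(2) by simp
        obtain y1 y2 where yy: "y1 \<noteq> y2" "b*y1^2 + (f + k*x)*y1 + (a*x^2 + g*x + c) = 0"
            "b*y2^2 + (f + k*x)*y2 + (a*x^2 + g*x + c) = 0"
          using quad_two[OF bnz _ T] fnz k0 by auto
        have "good ?C N u x y1" "good ?C N u x y2" using onc[OF yy(2)] onc[OF yy(3)] xu
          unfolding good_def by auto
        thus ?thesis using yy(1) by blast
      qed
    next
      case knz: False
      define n where "n = f/k"
      define \<gamma>' where "\<gamma>' = g/k"
      have fn: "f = k*n" unfolding n_def using knz by simp
      have QN: "qform ?C (f,g,k) = k^2 * qform ?C (n, \<gamma>', 1)"
        using qform_scale[of ?C k "(n,\<gamma>',1)"] fn knz unfolding \<gamma>'_def by (simp add: scale3_def mult.commute)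
      have Qn0: "qform ?C (n,\<gamma>',1) \<noteq> 0" using Q0 QN by auto
      define An where "An = a*n^2 + g*n + c"
      have QnA: "qform ?C (n,\<gamma>',1) = An + b*\<gamma>'^2"
      proof -
        have "qform ?C (n,\<gamma>',1) = An + b*\<gamma>'^2 + (f*\<gamma>' + k*n*\<gamma>')"
          unfolding An_def by (simp add: qform_def algebra_simps)
        also have "f*\<gamma>' + k*n*\<gamma>' = 0" using fn by simp
        finally show ?thesis by simp
      qed
      show ?thesis
      proof (cases "n^(qq+1) = u")
        case True
        obtain y0 where y0: "y0^2 = An/b" using sqrt_ex by blast
        have "b*y0^2 + (f + k*n)*y0 + An = 0" using y0 bnz fn by simp
        hence on: "(n,y0,1) \<in> conic ?C" unfolding An_def by (rule onc)
        have nu: "(n,\<gamma>',1) \<in> proj_pt N"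
          using nucleus_affine[OF nd nuc bnz knz] unfolding n_def \<gamma>'_def .
        have "y0 \<noteq> \<gamma>'"
        proof
          assume "y0 = \<gamma>'"
          hence "qform ?C (n,\<gamma>',1) = 0" using on by (simp add: conic_iff)
          thus False using Qn0 by simp
        qed
        moreover have "good ?C N u n y0" "good ?C N u n \<gamma>'" using on nu True unfolding good_def by auto
        ultimately show ?thesis by blast
      next
        case False
        define D where "D = n^(qq+1) + u"
        have Dnz: "D \<noteq> 0" unfolding D_def using False eq_add0 by simp
        have DG: "D \<in> GG" unfolding GG_def D_def using Dnz u norm_fix[of n]
          by (auto simp: GG_def q_add D_def)
        obtain s where s: "s^2 = b*An" using sqrt_ex by blast
        define \<beta> where "\<beta> = b*g/k^2 + s/k"
        have bt: "\<beta> \<noteq> 0"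
        proof
          assume "\<beta> = 0"
          hence "s/k = b*g/k^2" unfolding \<beta>_def using eq_add0 by (simp add: add.commute)
          hence "s = b*g/k" using knz by (simp add: field_simps power2_eq_square)
          hence "b*An = (b*g/k)^2" using s by simp
          hence "An = b*\<gamma>'^2" using knz bnz unfolding \<gamma>'_def by (simp add: field_simps power2_eq_square)
          thus False using Qn0 QnA eq_add0 by simp
        qed
        define \<alpha> where "\<alpha> = a*b/k^2"
        define nq where "nq = n^qq"
        define e where "e = \<beta>*nq/D"
        define r where "r = \<beta>^(qq+1) * u / D^2"
        have rG: "r \<in> GG" unfolding r_def
          by (intro GG_div GG_mult GG_norm bt u DG) (simp add: power2_eq_square GG_mult DG)
        have tau: "tr \<alpha> + tr e = 0 \<or> tr \<alpha> + tr e = 1"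
          using tr_01[of \<alpha>] tr_01[of e] char2 by auto
        obtain v where v: "v^(qq+1) = r" "tr v = tr \<alpha> + tr e" using circ_tr[OF rG tau] by blast
        define w where "w = e + v"
        have wnz: "w \<noteq> 0"
        proof
          assume "w = 0"
          hence ve: "v = e" unfolding w_def using eq_add0 by simp
          have "e^(qq+1) = \<beta>^(qq+1) * n^(qq+1) / D^2"
          proof -
            have "nq^(qq+1) = n^(qq+1)" unfolding nq_def
              by (metis norm_fix power_mult mult.commute)
            moreover have "D^(qq+1) = D^2" using DG unfolding GG_def by (simp add: power2_eq_square)
            ultimately show ?thesis unfolding e_def by (simp add: power_divide power_mult_distrib)
          qed
          hence "\<beta>^(qq+1) * n^(qq+1) / D^2 = \<beta>^(qq+1) * u / D^2" using v(1) ve unfolding r_def by simp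
          hence "n^(qq+1) = u" using bt Dnz by (simp add: field_simps)
          thus False using False by simp
        qed
        define x where "x = \<beta>/w + n"
        have xu: "x^(qq+1) = u"
        proof -
          let ?P = "\<lambda>z::'a. z^qq"
          have Pdiv: "?P (y/z) = ?P y / ?P z" for y z by (simp add: power_divide)
          have Pmul: "?P (y*z) = ?P y * ?P z" for y z by (simp add: power_mult_distrib)
          have Pn: "x^(qq+1) = x * ?P x" for x by simp
          define b1 where "b1 = ?P \<beta>"
          define w1 where "w1 = ?P w"
          have Dq: "?P D = D" using DG unfolding GG_def by simp
          have e1: "?P e = b1 * n / D" unfolding e_def nq_def b1_def using Dq fermat_qq
            by (simp add: Pdiv Pmul)
          have vv: "v * ?P v = r" using v(1) by simp
          have w1e: "w1 = ?P e + ?P v" unfolding w1_def w_def by (simp add: q_add)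
          have Dn: "D = n*nq + u" unfolding D_def nq_def by simp
          have H: "(D*w + \<beta>*nq)*(D*w1 + b1*n) = \<beta>*b1*u"
          proof -
            have "D*w + \<beta>*nq = D*v" unfolding w_def e_def using Dnz
              by (simp add: field_simps)
            moreover have "D*w1 + b1*n = D*?P v" unfolding w1e e1 using Dnz
              by (simp add: field_simps)
            moreover have "D*v*(D*?P v) = D^2 * r" using vv by (simp add: power2_eq_square algebra_simps)
            moreover have "D^2 * r = \<beta>*b1*u" unfolding r_def b1_def using Dnz by simp
            ultimately show ?thesis by simp
          qed
          have G: "\<beta>*b1 + \<beta>*nq*w1 + n*b1*w + n*nq*w*w1 - u*w*w1 = 0"
          proof -
            have I: "D*(\<beta>*b1 + \<beta>*nq*w1 + n*b1*w + n*nq*w*w1 - u*w*w1) =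
              ((D*w + \<beta>*nq)*(D*w1 + b1*n) - \<beta>*b1*u) + 2*(\<beta>*b1*u - u*D*w*w1)"
              unfolding Dn by (rule ident_mob)
            have "D*(\<beta>*b1 + \<beta>*nq*w1 + n*b1*w + n*nq*w*w1 - u*w*w1) = 0"
              unfolding I H by simp
            thus ?thesis using Dnz by simp
          qed
          have x1: "x = (\<beta> + n*w)/w" unfolding x_def using wnz by (simp add: field_simps)
          have w1nz: "w1 \<noteq> 0" unfolding w1_def using wnz by simp
          have Px: "?P x = (b1 + nq*w1)/w1" unfolding x1 b1_def nq_def w1_def by (simp add: Pdiv q_add Pmul)
          have "x^(qq+1) = ((\<beta> + n*w)/w) * ((b1 + nq*w1)/w1)" unfolding Pn Px using x1 by simp
          also have "\<dots> = (\<beta>*b1 + \<beta>*nq*w1 + n*b1*w + n*nq*w*w1)/(w*w1)"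
            by (simp add: field_simps)
          also have "\<beta>*b1 + \<beta>*nq*w1 + n*b1*w + n*nq*w*w1 = u*w*w1" using G by simp
          finally show ?thesis using wnz w1nz by simp
        qed
        define d where "d = \<beta>/w"
        have dnz: "d \<noteq> 0" unfolding d_def using bt wnz by simp
        have xd: "x = d + n" unfolding x_def d_def ..
        have B: "f + k*x = k*d" unfolding xd fn by (simp add: algebra_simps)
        have Bnz: "f + k*x \<noteq> 0" using B knz dnz by simp
        have A: "a*x^2 + g*x + c = a*d^2 + g*d + An"
          unfolding xd An_def by (simp add: sq_add algebra_simps)
        have X: "b*(a*x^2 + g*x + c)/(f + k*x)^2 = \<alpha> + (b*g/k^2)/d + (s/(k*d))^2"
          unfolding A B \<alpha>_def using s knz dnz by (simp add: field_simps power2_eq_square)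
        have "tr (b*(a*x^2 + g*x + c)/(f + k*x)^2) = tr \<alpha> + tr ((b*g/k^2)/d + s/(k*d))"
          unfolding X by (simp add: tr_add tr_sq)
        also have "(b*g/k^2)/d + s/(k*d) = \<beta>/d" unfolding \<beta>_def using knz dnz by (simp add: field_simps)
        also have "\<beta>/d = w" unfolding d_def using bt wnz by simp
        finally have T: "tr (b*(a*x^2 + g*x + c)/(f + k*x)^2) = 0"
          using v(2) unfolding w_def by (simp add: tr_add add.assoc[symmetric])
        obtain y1 y2 where yy: "y1 \<noteq> y2" "b*y1^2 + (f + k*x)*y1 + (a*x^2 + g*x + c) = 0"
            "b*y2^2 + (f + k*x)*y2 + (a*x^2 + g*x + c) = 0"
          using quad_two[OF bnz Bnz T] by blast
        have "good ?C N u x y1" "good ?C N u x y2" using onc[OF yy(2)] onc[OF yy(3)] xu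
          unfolding good_def by auto
        thus ?thesis using yy(1) by blast
      qed
    qed
  qed
qed

end

theorem lemma3p2:
  fixes h :: nat and U :: "'a::{field,finite} set" and \<Omega> :: "('a \<times> 'a \<times> 'a) set"
  assumes "h > 1"
    and "card (UNIV :: 'a set) = (2^h)^2"
    and "U \<noteq> {}"
    and "U \<subset> {x. x ^ (2^h) = x \<and> x \<noteq> 0}"
    and "regular_hyperoval \<Omega>"
  shows "card {(x, y). (x, y, 1) \<in> \<Omega> \<and> x ^ (2^h + 1) \<in> U} \<ge> 2"
proof -
  interpret F: F2 h "TYPE('a)"
    by unfold_locales (use assms(1,2) in auto)
  obtain u where u: "u \<in> U" using assms(3) by blast
  have uG: "u \<in> F.GG" using assms(4) u unfolding F.GG_def by auto
  obtain C N where CN: "nondegenerate_conic C" "is_nucleus C N" "\<Omega> = conic C \<union> proj_pt N"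
    using assms(5) unfolding regular_hyperoval_def by blast
  obtain a b c f g k where C: "C = (a,b,c,f,g,k)" by (cases C) auto
  obtain x1 y1 x2 y2 where P: "(x1,y1) \<noteq> (x2,y2)" "F.good C N u x1 y1" "F.good C N u x2 y2"
    using F.main[OF uG CN(1,2)[unfolded C]] C by blast
  let ?S = "{(x, y). (x, y, 1) \<in> \<Omega> \<and> x ^ (2^h + 1) \<in> U}"
  have "(x1,y1) \<in> ?S" "(x2,y2) \<in> ?S" using P(2,3) u unfolding F.good_def CN(3) by auto
  hence sub: "{(x1,y1),(x2,y2)} \<subseteq> ?S" by blast
  have fin: "finite ?S" by (rule finite_subset[OF subset_UNIV]) simp
  have "card {(x1,y1),(x2,y2)} = 2" using P(1) by simp
  moreover have "card {(x1,y1),(x2,y2)} \<le> card ?S" by (rule card_mono[OF fin sub])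
  ultimately show ?thesis by simp
qed

end
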